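(* Let $\mathcal A$ be a unital algebra with unit $\mathbf 1$ and let $(\mathbf R_n)_{n\in\mathbb Z}$ be invertible elements of $\mathcal A$ satisfying $$\mathbf R_{n+1}\mathbf R_n^{-1}\mathbf R_{n-1}=\mathbf R_n+\mathbf R_n^{-1}\qquad(n\in\mathbb Z).$$ Then $\mathbf C:=\mathbf R_{n+1}^{-1}\mathbf R_n\mathbf R_{n+1}\mathbf R_n^{-1}$ is independent of $n$, and $$\mathbf K:=(\mathbf R_{n+1}+\mathbf C\mathbf R_{n-1})\mathbf R_n^{-1}=\mathbf R_n^{-1}(\mathbf R_{n+1}\mathbf C+\mathbf R_{n-1})$$ (the two expressions being equal for each $n$) is also independent of $n$. *)

theory Defs
  imports Main
begin

text \<open>The element C_n = R_{n+1}^{-1} R_n R_{n+1} R_n^{-1}, given the sequence R and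
  the sequence Ri of its (two-sided) inverses.\<close>
definition Cel :: "(int \<Rightarrow> 'a::ring_1) \<Rightarrow> (int \<Rightarrow> 'a) \<Rightarrow> int \<Rightarrow> 'a" where
  "Cel R Ri n = Ri (n+1) * R n * R (n+1) * Ri n"

end

theory Submission
  imports Defs
begin

lemma const_int:
  fixes f :: "int \<Rightarrow> 'b"
  assumes "\<And>n. f n = f (n-1)"
  shows "f n = f m"
proof -
  have "\<And>k. f k = f 0"
  proof -
    fix k :: int
    show "f k = f 0"
    proof (induct k rule: int_induct[where k=0])
      case base then show ?case by simp
    next
      case (step1 i) then show ?case using assms[of "i+1"] by simp
    next
      case (step2 i) then show ?case using assms[of i] by simp
    qed
  qed
  then show ?thesis by metis
qed

theorem mainTheorem11:
  fixes R Ri :: "int \<Rightarrow> 'a::ring_1"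
  assumes inv_r: "\<And>n. R n * Ri n = 1"
      and inv_l: "\<And>n. Ri n * R n = 1"
      and rec: "\<And>n. R (n+1) * Ri n * R (n-1) = R n + Ri n"
  shows "(\<forall>n m. Cel R Ri n = Cel R Ri m)
       \<and> (\<forall>n. (R (n+1) + Cel R Ri n * R (n-1)) * Ri n = Ri n * (R (n+1) * Cel R Ri n + R (n-1)))
       \<and> (\<forall>n m. (R (n+1) + Cel R Ri n * R (n-1)) * Ri n = (R (m+1) + Cel R Ri m * R (m-1)) * Ri m)"
proof -
  have ir2: "R n * (Ri n * x) = x" for n x using inv_r[of n] by (metis mult.assoc mult_1_left)
  have il2: "Ri n * (R n * x) = x" for n x using inv_l[of n] by (metis mult.assoc mult_1_left)
  define X where "X n = R n + Ri n" for n
  have recA: "R (n+1) * (Ri n * (R (n-1) * x)) = X n * x" for n x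
    using rec[of n] by (metis X_def mult.assoc)
  have Xr: "R n * X n = X n * R n" for n by (simp add: X_def algebra_simps inv_r inv_l)
  have Xs: "Ri n * X n = X n * Ri n" for n by (simp add: X_def algebra_simps inv_r inv_l)
  have E1: "R (n+1) = X n * Ri (n-1) * R n" for n
  proof -
    have "R (n+1) = R (n+1) * Ri n * R (n-1) * Ri (n-1) * R n"
      by (simp add: mult.assoc ir2 il2 inv_l inv_r)
    also have "\<dots> = X n * Ri (n-1) * R n" using rec[of n] by (simp add: X_def)
    finally show ?thesis .
  qed
  have E2: "R (n-1) = R n * Ri (n+1) * X n" for n
  proof -
    have "R (n-1) = R n * Ri (n+1) * (R (n+1) * Ri n * R (n-1))"
      by (simp add: mult.assoc ir2 il2 inv_l inv_r)
    also have "\<dots> = R n * Ri (n+1) * X n" using rec[of n] by (simp add: X_def)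
    finally show ?thesis .
  qed
  have C1: "Cel R Ri n = Ri (n+1) * R n * X n * Ri (n-1)" for n
  proof -
    have "Cel R Ri n = Ri (n+1) * R n * (X n * Ri (n-1) * R n) * Ri n"
      unfolding Cel_def using E1[of n] by simp
    also have "\<dots> = Ri (n+1) * R n * X n * Ri (n-1)" by (simp add: mult.assoc ir2 inv_r inv_l)
    finally show ?thesis .
  qed
  have Cstep: "Cel R Ri n = Cel R Ri (n-1)" for n
  proof -
    have "Cel R Ri (n-1) = Ri n * R (n-1) * R n * Ri (n-1)" unfolding Cel_def by simp
    also have "\<dots> = Ri n * (R n * Ri (n+1) * X n) * R n * Ri (n-1)" using E2[of n] by simp
    also have "\<dots> = Ri (n+1) * (X n * R n) * Ri (n-1)" by (simp add: mult.assoc il2 inv_r inv_l)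
    also have "\<dots> = Ri (n+1) * R n * X n * Ri (n-1)" by (simp add: Xr mult.assoc)
    finally show ?thesis using C1[of n] by simp
  qed
  have Cconst: "Cel R Ri n = Cel R Ri m" for n m
    by (rule const_int[where f="Cel R Ri"], rule Cstep)
  have rC: "R (n+1) * Cel R Ri n = X n * R n * Ri (n-1)" for n
  proof -
    have "R (n+1) * Cel R Ri n = R (n+1) * Cel R Ri (n-1)" using Cstep by simp
    also have "\<dots> = (R (n+1) * Ri n * R (n-1)) * R n * Ri (n-1)"
      unfolding Cel_def by (simp add: mult.assoc)
    also have "\<dots> = X n * R n * Ri (n-1)" using rec[of n] by (simp add: X_def)
    finally show ?thesis .
  qed
  have K1: "(R (n+1) + Cel R Ri n * R (n-1)) * Ri n = X n * Ri (n-1) + Ri (n+1) * X n" for n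
  proof -
    have a: "R (n+1) * Ri n = X n * Ri (n-1)" using E1[of n] by (simp add: mult.assoc ir2 inv_r inv_l)
    have "Cel R Ri n * R (n-1) * Ri n = Ri (n+1) * R n * (R (n+1) * Ri n * R (n-1)) * Ri n"
      unfolding Cel_def by (simp add: mult.assoc)
    also have "\<dots> = Ri (n+1) * (R n * X n) * Ri n" by (simp add: recA mult.assoc)
    also have "\<dots> = Ri (n+1) * X n" by (simp add: Xr mult.assoc ir2 inv_r inv_l)
    finally show ?thesis using a by (simp add: distrib_right)
  qed
  have K2: "Ri n * (R (n+1) * Cel R Ri n + R (n-1)) = X n * Ri (n-1) + Ri (n+1) * X n" for n
  proof -
    have a: "Ri n * (R (n+1) * Cel R Ri n) = X n * Ri (n-1)"
      by (simp add: rC mult.assoc[symmetric] Xs) (simp add: mult.assoc il2 inv_r inv_l)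
    have b: "Ri n * R (n-1) = Ri (n+1) * X n" using E2[of n] by (simp add: mult.assoc il2 inv_r inv_l)
    show ?thesis using a b by (simp add: distrib_left)
  qed
  define K where "K n = (R (n+1) + Cel R Ri n * R (n-1)) * Ri n" for n
  have Kstep: "K n = K (n-1)" for n
  proof -
    have h: "Cel R Ri (n-1) * R (n-1-1) = Ri n * R (n-1) * X (n-1)"
    proof -
      have "Cel R Ri (n-1) * R (n-1-1) = Ri n * R (n-1) * (R n * Ri (n-1) * R (n-1-1))"
        unfolding Cel_def by (simp add: mult.assoc)
      also have "\<dots> = Ri n * R (n-1) * X (n-1)" using rec[of "n-1"] by (simp add: X_def)
      finally show ?thesis .
    qed
    have "K (n-1) = R n * Ri (n-1) + Ri n * (R (n-1) * X (n-1) * Ri (n-1))"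
      unfolding K_def using h by (simp add: distrib_right mult.assoc)
    also have "\<dots> = R n * Ri (n-1) + Ri n * (X (n-1) * R (n-1) * Ri (n-1))" by (simp add: Xr)
    also have "\<dots> = R n * Ri (n-1) + Ri n * X (n-1)" by (simp add: mult.assoc ir2 inv_r inv_l)
    also have "\<dots> = X n * Ri (n-1) + Ri n * R (n-1)"
      by (simp add: X_def algebra_simps ir2 inv_r)
    also have "\<dots> = K n" unfolding K_def using K1[of n] K2[of n] E2[of n]
      by (simp add: mult.assoc il2 inv_r inv_l)
    finally show ?thesis by simp
  qed
  have Kconst: "K n = K m" for n m by (rule const_int[where f=K], rule Kstep)
  show ?thesis using Cconst K1 K2 Kconst unfolding K_def by simp
qed

end
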